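(* Let $n\ge 2$, let $\rho>0$ and let $d_1,\dots,d_n>0$. Let $W=(w_{ij})$ be the $n\times n$ matrix with $w_{ij}=1/d_{\min(i,j)}$, let $\mathbf 1\in\mathbb R^n$ be the column vector of ones, and set $M=W-\frac{1}{\rho}\mathbf 1\mathbf 1^T$. If there exist indices $j<k$ with $d_k>d_j$, then $M$ is not positive semidefinite.
   Context: Interpretation: $d_i$ is the density of the cargo placed in the $i$-th position from the bottom of a vessel and $\rho$ is the water density; the hypothesis says some cargo is placed above a cargo of lower density. *)

theory Defs
  imports Complex_Main
begin

definition psd :: "nat \<Rightarrow> (nat \<Rightarrow> nat \<Rightarrow> real) \<Rightarrow> bool" where
  "psd n A \<longleftrightarrow> (\<forall>x :: nat \<Rightarrow> real. 0 \<le> (\<Sum>i=1..n. \<Sum>j=1..n. x i * A i j * x j))"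

end

theory Submission
  imports Defs
begin

lemma quad2:
  fixes A :: "nat \<Rightarrow> nat \<Rightarrow> real"
  assumes "j \<in> {1..n}" "k \<in> {1..n}" "j \<noteq> k"
  defines "x \<equiv> (\<lambda>l. (if l = j then 1 else 0) - (if l = k then 1 else (0::real)))"
  shows "(\<Sum>i=1..n. \<Sum>l=1..n. x i * A i l * x l) = A j j - A j k - A k j + A k k"
proof -
  have inner: "(\<Sum>l=1..n. x i * A i l * x l) = x i * (A i j - A i k)" for i
  proof -
    have "(\<Sum>l=1..n. x i * A i l * x l)
        = (\<Sum>l=1..n. (if l = j then x i * A i l else 0)) - (\<Sum>l=1..n. (if l = k then x i * A i l else 0))"
      unfolding sum_subtractf[symmetric] by (rule sum.cong) (use assms(3) in \<open>auto simp: x_def\<close>)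
    also have "\<dots> = x i * A i j - x i * A i k" using assms(1,2) by simp
    finally show ?thesis by (simp add: algebra_simps)
  qed
  have "(\<Sum>i=1..n. \<Sum>l=1..n. x i * A i l * x l) = (\<Sum>i=1..n. x i * (A i j - A i k))"
    by (rule sum.cong[OF refl inner])
  also have "\<dots> = (\<Sum>i=1..n. (if i = j then (A i j - A i k) else 0)) - (\<Sum>i=1..n. (if i = k then (A i j - A i k) else 0))"
    unfolding sum_subtractf[symmetric] by (rule sum.cong) (use assms(3) in \<open>auto simp: x_def\<close>)
  also have "\<dots> = A j j - A j k - A k j + A k k" using assms(1,2) by simp
  finally show ?thesis .
qed

theorem mainTheorem2:
  fixes n :: nat and \<rho> :: real and d :: "nat \<Rightarrow> real"
  assumes "n \<ge> 2" and "\<rho> > 0"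
    and "\<forall>i\<in>{1..n}. d i > 0"
    and "\<exists>j k. 1 \<le> j \<and> j < k \<and> k \<le> n \<and> d k > d j"
  shows "\<not> psd n (\<lambda>i j. 1 / d (min i j) - 1 / \<rho>)"
proof
  assume p: "psd n (\<lambda>i j. 1 / d (min i j) - 1 / \<rho>)"
  obtain j k where jk: "1 \<le> j" "j < k" "k \<le> n" "d k > d j" using assms(4) by blast
  have dj: "d j > 0" using assms(3) jk by auto
  let ?x = "(\<lambda>l. (if l = j then 1 else 0) - (if l = k then 1 else (0::real)))"
  have "0 \<le> (\<Sum>i=1..n. \<Sum>l=1..n. ?x i * (1 / d (min i l) - 1 / \<rho>) * ?x l)"
    using p unfolding psd_def by (rule spec)
  also have "\<dots> = 1 / d k - 1 / d j"
    using quad2[of j n k "\<lambda>i j. 1 / d (min i j) - 1 / \<rho>"] jk by (simp add: min_def)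
  also have "\<dots> < 0" using dj jk by (simp add: frac_less2)
  finally show False by simp
qed

end
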